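(* (i) If $C$ is a self-orthogonal linear code over $\mathbb{Z}_4+u\mathbb{Z}_4$, then for every codeword $c\in C$ and each $i\in\{1,2\}$, the number $n_{\mathfrak{U}_i}(c)$ of coordinates of $c$ lying in $\mathfrak{U}_i$ is even. (ii) If $C$ is a self-dual code over $\mathbb{Z}_4+u\mathbb{Z}_4$ of length $n$, then the vector $(2u,2u,\dots,2u)$ of length $n$ belongs to $C$.
   Context: $\mathbb{Z}_4+u\mathbb{Z}_4$ is the commutative ring of characteristic $4$ with $u^2=0$. A linear code of length $n$ is a submodule $C$ of $(\mathbb{Z}_4+u\mathbb{Z}_4)^n$; its dual $C^\perp$ is taken with respect to the Euclidean inner product $\sum_i x_iy_i$ computed in the ring; $C$ is self-orthogonal if $C\subseteq C^\perp$ and self-dual if $C=C^\perp$. The units of first type are $\mathfrak{U}_1=\{1,3,1+2u,3+2u\}$ and the units of second type are $\mathfrak{U}_2=\{1+u,3+u,1+3u,3+3u\}$. *)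

theory Defs
  imports Main "HOL-Library.Numeral_Type"
begin

text \<open>The ring Z4 + u Z4 (u^2 = 0): an element a + b u is represented as ZU a b
  with a, b in Z4 (the library type 4 of integers modulo 4).\<close>

datatype zu = ZU (re: "4") (im: "4")

instantiation zu :: comm_ring_1
begin
definition "zero_zu = ZU 0 0"
definition "one_zu = ZU 1 0"
definition "plus_zu x y = ZU (re x + re y) (im x + im y)"
definition "minus_zu x y = ZU (re x - re y) (im x - im y)"
definition "uminus_zu x = ZU (- re x) (- im x)"
definition "times_zu x y = ZU (re x * re y) (re x * im y + im x * re y)"
instance
  by standard (auto simp: zero_zu_def one_zu_def plus_zu_def minus_zu_def
      uminus_zu_def times_zu_def algebra_simps intro: zu.expand)
end

definition uu :: zu where "uu = ZU 0 1"

definition U1 :: "zu set" where "U1 = {ZU 1 0, ZU 3 0, ZU 1 2, ZU 3 2}"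
definition U2 :: "zu set" where "U2 = {ZU 1 1, ZU 3 1, ZU 1 3, ZU 3 3}"

definition words :: "nat \<Rightarrow> (nat \<Rightarrow> zu) set" where
  "words n = {x. \<forall>i\<ge>n. x i = 0}"

definition linear_code :: "nat \<Rightarrow> (nat \<Rightarrow> zu) set \<Rightarrow> bool" where
  "linear_code n C \<longleftrightarrow> C \<subseteq> words n \<and> (\<lambda>_. 0) \<in> C \<and>
     (\<forall>x\<in>C. \<forall>y\<in>C. (\<lambda>i. x i + y i) \<in> C) \<and>
     (\<forall>r. \<forall>x\<in>C. (\<lambda>i. r * x i) \<in> C)"

definition inner :: "nat \<Rightarrow> (nat \<Rightarrow> zu) \<Rightarrow> (nat \<Rightarrow> zu) \<Rightarrow> zu" where
  "inner n x y = (\<Sum>i<n. x i * y i)"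

definition dual :: "nat \<Rightarrow> (nat \<Rightarrow> zu) set \<Rightarrow> (nat \<Rightarrow> zu) set" where
  "dual n C = {y \<in> words n. \<forall>x\<in>C. inner n x y = 0}"

definition self_orthogonal :: "nat \<Rightarrow> (nat \<Rightarrow> zu) set \<Rightarrow> bool" where
  "self_orthogonal n C \<longleftrightarrow> C \<subseteq> dual n C"

definition self_dual :: "nat \<Rightarrow> (nat \<Rightarrow> zu) set \<Rightarrow> bool" where
  "self_dual n C \<longleftrightarrow> C = dual n C"

definition nU :: "zu set \<Rightarrow> nat \<Rightarrow> (nat \<Rightarrow> zu) \<Rightarrow> nat" where
  "nU U n c = card {i. i < n \<and> c i \<in> U}"

end

theory Submission
  imports Defs
begin

lemma four_cases: "(x::4) = 0 \<or> x = 1 \<or> x = 2 \<or> x = 3"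
proof (cases x)
  case (of_int z)
  then have "z \<in> {0,1,2,3}" by auto
  then show ?thesis using of_int by auto
qed

lemma mulZ: "ZU a b * ZU c d = ZU (a*c) (a*d+b*c)" by (simp add: times_zu_def)

lemma sqg00: "ZU 0 0 * ZU 0 0 = (if ZU 0 0 \<in> U1 then ZU 1 0 else if ZU 0 0 \<in> U2 then ZU 1 2 else ZU 0 0)" by (simp add: mulZ U1_def U2_def)
lemma twg00: "ZU 0 2 * ZU 0 0 = ZU 0 2 * (ZU 0 0 * ZU 0 0)" by (simp add: mulZ)
lemma sqg01: "ZU 0 1 * ZU 0 1 = (if ZU 0 1 \<in> U1 then ZU 1 0 else if ZU 0 1 \<in> U2 then ZU 1 2 else ZU 0 0)" by (simp add: mulZ U1_def U2_def)
lemma twg01: "ZU 0 2 * ZU 0 1 = ZU 0 2 * (ZU 0 1 * ZU 0 1)" by (simp add: mulZ)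
lemma sqg02: "ZU 0 2 * ZU 0 2 = (if ZU 0 2 \<in> U1 then ZU 1 0 else if ZU 0 2 \<in> U2 then ZU 1 2 else ZU 0 0)" by (simp add: mulZ U1_def U2_def)
lemma twg02: "ZU 0 2 * ZU 0 2 = ZU 0 2 * (ZU 0 2 * ZU 0 2)" by (simp add: mulZ)
lemma sqg03: "ZU 0 3 * ZU 0 3 = (if ZU 0 3 \<in> U1 then ZU 1 0 else if ZU 0 3 \<in> U2 then ZU 1 2 else ZU 0 0)" by (simp add: mulZ U1_def U2_def)
lemma twg03: "ZU 0 2 * ZU 0 3 = ZU 0 2 * (ZU 0 3 * ZU 0 3)" by (simp add: mulZ)
lemma sqg10: "ZU 1 0 * ZU 1 0 = (if ZU 1 0 \<in> U1 then ZU 1 0 else if ZU 1 0 \<in> U2 then ZU 1 2 else ZU 0 0)" by (simp add: mulZ U1_def U2_def)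
lemma twg10: "ZU 0 2 * ZU 1 0 = ZU 0 2 * (ZU 1 0 * ZU 1 0)" by (simp add: mulZ)
lemma sqg11: "ZU 1 1 * ZU 1 1 = (if ZU 1 1 \<in> U1 then ZU 1 0 else if ZU 1 1 \<in> U2 then ZU 1 2 else ZU 0 0)" by (simp add: mulZ U1_def U2_def)
lemma twg11: "ZU 0 2 * ZU 1 1 = ZU 0 2 * (ZU 1 1 * ZU 1 1)" by (simp add: mulZ)
lemma sqg12: "ZU 1 2 * ZU 1 2 = (if ZU 1 2 \<in> U1 then ZU 1 0 else if ZU 1 2 \<in> U2 then ZU 1 2 else ZU 0 0)" by (simp add: mulZ U1_def U2_def)
lemma twg12: "ZU 0 2 * ZU 1 2 = ZU 0 2 * (ZU 1 2 * ZU 1 2)" by (simp add: mulZ)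
lemma sqg13: "ZU 1 3 * ZU 1 3 = (if ZU 1 3 \<in> U1 then ZU 1 0 else if ZU 1 3 \<in> U2 then ZU 1 2 else ZU 0 0)" by (simp add: mulZ U1_def U2_def)
lemma twg13: "ZU 0 2 * ZU 1 3 = ZU 0 2 * (ZU 1 3 * ZU 1 3)" by (simp add: mulZ)
lemma sqg20: "ZU 2 0 * ZU 2 0 = (if ZU 2 0 \<in> U1 then ZU 1 0 else if ZU 2 0 \<in> U2 then ZU 1 2 else ZU 0 0)" by (simp add: mulZ U1_def U2_def)
lemma twg20: "ZU 0 2 * ZU 2 0 = ZU 0 2 * (ZU 2 0 * ZU 2 0)" by (simp add: mulZ)
lemma sqg21: "ZU 2 1 * ZU 2 1 = (if ZU 2 1 \<in> U1 then ZU 1 0 else if ZU 2 1 \<in> U2 then ZU 1 2 else ZU 0 0)" by (simp add: mulZ U1_def U2_def)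
lemma twg21: "ZU 0 2 * ZU 2 1 = ZU 0 2 * (ZU 2 1 * ZU 2 1)" by (simp add: mulZ)
lemma sqg22: "ZU 2 2 * ZU 2 2 = (if ZU 2 2 \<in> U1 then ZU 1 0 else if ZU 2 2 \<in> U2 then ZU 1 2 else ZU 0 0)" by (simp add: mulZ U1_def U2_def)
lemma twg22: "ZU 0 2 * ZU 2 2 = ZU 0 2 * (ZU 2 2 * ZU 2 2)" by (simp add: mulZ)
lemma sqg23: "ZU 2 3 * ZU 2 3 = (if ZU 2 3 \<in> U1 then ZU 1 0 else if ZU 2 3 \<in> U2 then ZU 1 2 else ZU 0 0)" by (simp add: mulZ U1_def U2_def)
lemma twg23: "ZU 0 2 * ZU 2 3 = ZU 0 2 * (ZU 2 3 * ZU 2 3)" by (simp add: mulZ)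
lemma sqg30: "ZU 3 0 * ZU 3 0 = (if ZU 3 0 \<in> U1 then ZU 1 0 else if ZU 3 0 \<in> U2 then ZU 1 2 else ZU 0 0)" by (simp add: mulZ U1_def U2_def)
lemma twg30: "ZU 0 2 * ZU 3 0 = ZU 0 2 * (ZU 3 0 * ZU 3 0)" by (simp add: mulZ)
lemma sqg31: "ZU 3 1 * ZU 3 1 = (if ZU 3 1 \<in> U1 then ZU 1 0 else if ZU 3 1 \<in> U2 then ZU 1 2 else ZU 0 0)" by (simp add: mulZ U1_def U2_def)
lemma twg31: "ZU 0 2 * ZU 3 1 = ZU 0 2 * (ZU 3 1 * ZU 3 1)" by (simp add: mulZ)
lemma sqg32: "ZU 3 2 * ZU 3 2 = (if ZU 3 2 \<in> U1 then ZU 1 0 else if ZU 3 2 \<in> U2 then ZU 1 2 else ZU 0 0)" by (simp add: mulZ U1_def U2_def)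
lemma twg32: "ZU 0 2 * ZU 3 2 = ZU 0 2 * (ZU 3 2 * ZU 3 2)" by (simp add: mulZ)
lemma sqg33: "ZU 3 3 * ZU 3 3 = (if ZU 3 3 \<in> U1 then ZU 1 0 else if ZU 3 3 \<in> U2 then ZU 1 2 else ZU 0 0)" by (simp add: mulZ U1_def U2_def)
lemma twg33: "ZU 0 2 * ZU 3 3 = ZU 0 2 * (ZU 3 3 * ZU 3 3)" by (simp add: mulZ)

lemma zu_cases16: "P (ZU 0 0) \<Longrightarrow> P (ZU 0 1) \<Longrightarrow> P (ZU 0 2) \<Longrightarrow> P (ZU 0 3) \<Longrightarrow> P (ZU 1 0) \<Longrightarrow> P (ZU 1 1) \<Longrightarrow> P (ZU 1 2) \<Longrightarrow> P (ZU 1 3) \<Longrightarrow> P (ZU 2 0) \<Longrightarrow> P (ZU 2 1) \<Longrightarrow> P (ZU 2 2) \<Longrightarrow> P (ZU 2 3) \<Longrightarrow> P (ZU 3 0) \<Longrightarrow> P (ZU 3 1) \<Longrightarrow> P (ZU 3 2) \<Longrightarrow> P (ZU 3 3) \<Longrightarrow> P x"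
proof -
  assume h: "P (ZU 0 0)" "P (ZU 0 1)" "P (ZU 0 2)" "P (ZU 0 3)" "P (ZU 1 0)" "P (ZU 1 1)" "P (ZU 1 2)" "P (ZU 1 3)" "P (ZU 2 0)" "P (ZU 2 1)" "P (ZU 2 2)" "P (ZU 2 3)" "P (ZU 3 0)" "P (ZU 3 1)" "P (ZU 3 2)" "P (ZU 3 3)"
  obtain a b where x: "x = ZU a b" by (cases x) auto
  show ?thesis unfolding x using four_cases[of a] four_cases[of b] h by (elim disjE; simp only:)
qed

lemma sq: "x * x = (if x \<in> U1 then ZU 1 0 else if x \<in> U2 then ZU 1 2 else ZU 0 0)"
  by (rule zu_cases16[where P="\<lambda>x. x * x = (if x \<in> U1 then ZU 1 0 else if x \<in> U2 then ZU 1 2 else ZU 0 0)"]; rule sqg00 sqg01 sqg02 sqg03 sqg10 sqg11 sqg12 sqg13 sqg20 sqg21 sqg22 sqg23 sqg30 sqg31 sqg32 sqg33)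

lemma twou: "2*uu = ZU 0 2"
proof -
  have "2*uu = uu + uu" by (rule mult_2)
  also have "\<dots> = ZU (0+0) (1+1)" by (simp only: uu_def plus_zu_def zu.sel)
  also have "\<dots> = ZU 0 2" by (simp only: add_0 one_add_one)
  finally show ?thesis .
qed

lemma tw: "ZU 0 2 * x = ZU 0 2 * (x * (x::zu))"
  by (rule zu_cases16[where P="\<lambda>x. ZU 0 2 * x = ZU 0 2 * (x * (x::zu))"]; rule twg00 twg01 twg02 twg03 twg10 twg11 twg12 twg13 twg20 twg21 twg22 twg23 twg30 twg31 twg32 twg33)

lemma re_of_nat: "re (of_nat k :: zu) = of_nat k \<and> im (of_nat k :: zu) = 0"
  by (induction k) (auto simp: zero_zu_def one_zu_def plus_zu_def)

lemma re_im_mul: "re (of_nat k * ZU a b) = of_nat k * a \<and> im (of_nat k * ZU a b) = of_nat k * b"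
  by (simp add: times_zu_def re_of_nat)

lemma re_im_add: "re (x + y) = re x + re y \<and> im (x + y) = im x + im y"
  by (simp add: plus_zu_def)

lemma U12: "U1 \<inter> U2 = {}"
  by (simp add: U1_def U2_def)

lemma part1:
  assumes "linear_code n C" "self_orthogonal n C" "c \<in> C"
  shows "even (nU U1 n c) \<and> even (nU U2 n c)"
proof -
  have "c \<in> dual n C" using assms unfolding self_orthogonal_def by blast
  hence z: "inner n c c = 0" using assms(3) unfolding dual_def by blast
  define A1 where "A1 = {i. i < n \<and> c i \<in> U1}"
  define A2 where "A2 = {i. i < n \<and> c i \<in> U2}"
  have "inner n c c = (\<Sum>i<n. (if c i \<in> U1 then ZU 1 0 else if c i \<in> U2 then ZU 1 2 else ZU 0 0))"
    unfolding inner_def using sq by simp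
  also have "\<dots> = (\<Sum>i\<in>{..<n} \<inter> {i. c i \<in> U1}. ZU 1 0)
      + (\<Sum>i\<in>{..<n} \<inter> - {i. c i \<in> U1}. (if c i \<in> U2 then ZU 1 2 else ZU 0 0))"
    by (rule sum.If_cases) simp
  also have "(\<Sum>i\<in>{..<n} \<inter> - {i. c i \<in> U1}. (if c i \<in> U2 then ZU 1 2 else ZU 0 0))
     = (\<Sum>i\<in>{..<n} \<inter> - {i. c i \<in> U1} \<inter> {i. c i \<in> U2}. ZU 1 2)
      + (\<Sum>i\<in>{..<n} \<inter> - {i. c i \<in> U1} \<inter> - {i. c i \<in> U2}. ZU 0 0)"
    by (rule sum.If_cases) simp
  also have "{..<n} \<inter> - {i. c i \<in> U1} \<inter> {i. c i \<in> U2} = A2"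
    unfolding A2_def using U12 by auto
  also have "{..<n} \<inter> {i. c i \<in> U1} = A1" unfolding A1_def by auto
  finally have e: "0 = of_nat (card A1) * ZU 1 0 + of_nat (card A2) * ZU 1 2"
    using z by (simp add: zero_zu_def[symmetric])
  have r: "(0::4) = of_nat (card A1) + of_nat (card A2)"
    using arg_cong[OF e, of re] by (simp add: re_im_add re_im_mul zero_zu_def)
  have i: "(0::4) = of_nat (card A2) * 2"
    using arg_cong[OF e, of im] by (simp add: re_im_add re_im_mul zero_zu_def)
  have "of_nat (card A1 + card A2) = (0::4)" using r by simp
  hence d1: "4 dvd card A1 + card A2" by (subst (asm) of_nat_eq_0_iff_char_dvd) simp
  have "of_nat (card A2 * 2) = (0::4)" using i by simp
  hence d2: "4 dvd card A2 * 2" by (subst (asm) of_nat_eq_0_iff_char_dvd) simp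
  have "even (card A2)" using d2 by presburger
  moreover have "even (card A1)" using d1 d2 by presburger
  ultimately show ?thesis unfolding nU_def A1_def A2_def by simp
qed

lemma part2:
  assumes "linear_code n C" "self_dual n C"
  shows "(\<lambda>i. if i < n then 2 * uu else 0) \<in> C"
proof -
  let ?w = "\<lambda>i. if i < n then 2 * uu else (0::zu)"
  have "?w \<in> dual n C"
    unfolding dual_def words_def
  proof (intro CollectI conjI allI impI ballI)
    fix x assume x: "x \<in> C"
    hence "x \<in> dual n C" using assms(2) unfolding self_dual_def by blast
    hence z: "inner n x x = 0" using x unfolding dual_def by blast
    have "inner n x ?w = (\<Sum>i<n. ZU 0 2 * x i)"
      unfolding inner_def twou by (simp add: mult.commute)
    also have "\<dots> = (\<Sum>i<n. ZU 0 2 * (x i * x i))" using tw by simp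
    also have "\<dots> = ZU 0 2 * inner n x x" unfolding inner_def by (simp add: sum_distrib_left)
    finally show "inner n x ?w = 0" using z by simp
  qed auto
  thus ?thesis using assms(2) unfolding self_dual_def by simp
qed

theorem theorem4p2:
  shows "(\<forall>n C. linear_code n C \<and> self_orthogonal n C \<longrightarrow>
            (\<forall>c\<in>C. even (nU U1 n c) \<and> even (nU U2 n c)))
       \<and> (\<forall>n C. linear_code n C \<and> self_dual n C \<longrightarrow>
            (\<lambda>i. if i < n then 2 * uu else 0) \<in> C)"
  using part1 part2 by blast

end
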